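(* In every run of the algorithm described in the context, at every time and for all $i,j\in\{1,\dots,n\}$, we have $w\_sync_i[i]\ge w\_sync_j[i]$.
   Context: Model. There are $n$ asynchronous processes $p_1,\dots,p_n$, of which up to $t<n/2$ may crash; a process runs its algorithm correctly until it crashes. Each ordered pair of processes is linked by a reliable (no loss, corruption, duplication or creation), asynchronous, not necessarily FIFO channel. $p_w$ is the single writer, invoking writes sequentially; $v_0$ is the initial value. Messages: $\textsc{write}(b,v)$ with $b\in\{0,1\}$, which stands for the two types $\textsc{write0}(v)$ and $\textsc{write1}(v)$; $\textsc{read}()$; $\textsc{proceed}()$. Variables of $p_i$. These are: $history_i$ with $history_i[0]=v_0$; $w\_sync_i[1..n]$, initially all $0$; $r\_sync_i[1..n]$, initially all $0$. $\mathsf{write}(v)$ by $p_w$: $wsn\gets w\_sync_w[w]+1$; $w\_sync_w[w]\gets wsn$; $history_w[wsn]\gets v$. Send $\textsc{write}(wsn\bmod 2,v)$ to each $p_j$ with $w\_sync_w[j]=wsn-1$. Wait until at least $n-t$ indices $j$ have $w\_sync_w[j]=wsn$. Return. $\mathsf{read}()$ by $p_i$: $r\_sync_i[i]\gets r\_sync_i[i]+1$ and call the new value $rsn$. Send $\textsc{read}()$ to all $p_j$ with $j\ne i$. Wait until at least $n-t$ indices $j$ have $r\_sync_i[j]=rsn$. Let $sn\gets w\_sync_i[i]$. Wait until at least $n-t$ indices $j$ have $w\_sync_i[j]\ge sn$. Return $history_i[sn]$. On receipt of $\textsc{write}(b,v)$ from $p_j$ at $p_i$: Wait until $b=(w\_sync_i[j]+1)\bmod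 2$. Let $wsn\gets w\_sync_i[j]+1$. If $wsn=w\_sync_i[i]+1$, then set $w\_sync_i[i]\gets wsn$ and $history_i[wsn]\gets v$, and send $\textsc{write}(wsn\bmod 2,v)$ to each $p_\ell$ with $w\_sync_i[\ell]=wsn-1$. Else, if $wsn<w\_sync_i[i]$, send $\textsc{write}((wsn+1)\bmod 2,history_i[wsn+1])$ to $p_j$. Finally set $w\_sync_i[j]\gets wsn$. On receipt of $\textsc{read}()$ from $p_j$ at $p_i$: Let $sn\gets w\_sync_i[i]$; wait until $w\_sync_i[j]\ge sn$; send $\textsc{proceed}()$ to $p_j$. On receipt of $\textsc{proceed}()$ from $p_j$ at $p_i$: $r\_sync_i[j]\gets r\_sync_i[j]+1$. Message handlers run concurrently; a waiting handler does not block the reception of other messages. *)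

theory Defs
  imports Main "HOL-Library.Multiset"
begin

text \<open>Processes are 1..n (naturals),
 p_w is the writer, the value type is 'v with initial value v0. Each local step
 (operation invocation, end of a wait, reception of a message, execution of an enabled
 message handler) is atomic; handlers that wait are kept in a pool of pending handler
 instances, so they do not block the reception of other messages. The channels are a
 multiset of in-transit messages (sender, receiver, message): reliable and not FIFO.\<close>

datatype 'v msg = WriteM nat 'v | ReadM | ProceedM

text \<open>Pending handler instances: a WRITE(b,v) handler from p_j waiting for its condition,
 and a READ handler from p_j that captured sn = w_sync_i[i] on receipt.\<close>
datatype 'v hnd = HWrite nat nat 'v | HRead nat nat

datatype opstate = Idle | Writing nat | ReadWait1 nat | ReadWait2 nat

record 'v lstate =
  history :: "nat \<Rightarrow> 'v"
  w_sync :: "nat \<Rightarrow> nat"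
  r_sync :: "nat \<Rightarrow> nat"
  opst :: opstate
  pend :: "'v hnd multiset"

record 'v gstate =
  loc :: "nat \<Rightarrow> 'v lstate"
  net :: "(nat \<times> nat \<times> 'v msg) multiset"
  crashed :: "nat set"

definition init_state :: "'v \<Rightarrow> 'v gstate" where
  "init_state v0 = \<lparr> loc = (\<lambda>i. \<lparr> history = (\<lambda>k. if k = 0 then v0 else undefined),
      w_sync = (\<lambda>j. 0), r_sync = (\<lambda>j. 0), opst = Idle, pend = {#} \<rparr>),
    net = {#}, crashed = {} \<rparr>"

definition send_to :: "nat \<Rightarrow> nat \<Rightarrow> (nat \<Rightarrow> bool) \<Rightarrow> 'v msg \<Rightarrow> (nat \<times> nat \<times> 'v msg) multiset" where
  "send_to n i P m = image_mset (\<lambda>l. (i, l, m)) (mset_set {l \<in> {1..n}. P l})"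

definition set_loc :: "'v gstate \<Rightarrow> nat \<Rightarrow> 'v lstate \<Rightarrow> 'v gstate" where
  "set_loc s i ls = s\<lparr> loc := (loc s)(i := ls) \<rparr>"

text \<open>Body of the WRITE(b,v) handler at p_i for a message from p_j, executed once
 its wait condition b = (w_sync_i[j]+1) mod 2 holds. Returns new local state and sent messages.\<close>
definition write_body :: "nat \<Rightarrow> nat \<Rightarrow> nat \<Rightarrow> 'v \<Rightarrow> 'v lstate \<Rightarrow> 'v lstate \<times> (nat \<times> nat \<times> 'v msg) multiset" where
  "write_body n i j v ls =
    (let wsn = w_sync ls j + 1 in
     if wsn = w_sync ls i + 1 then
       (let ws' = (w_sync ls)(i := wsn);
            ls1 = ls\<lparr> w_sync := ws', history := (history ls)(wsn := v) \<rparr>;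
            out = send_to n i (\<lambda>l. ws' l = wsn - 1) (WriteM (wsn mod 2) v)
        in (ls1\<lparr> w_sync := (w_sync ls1)(j := wsn) \<rparr>, out))
     else if wsn < w_sync ls i then
       (ls\<lparr> w_sync := (w_sync ls)(j := wsn) \<rparr>,
        {# (i, j, WriteM ((wsn + 1) mod 2) (history ls (wsn + 1))) #})
     else (ls\<lparr> w_sync := (w_sync ls)(j := wsn) \<rparr>, {#}))"

inductive step :: "nat \<Rightarrow> nat \<Rightarrow> nat \<Rightarrow> 'v gstate \<Rightarrow> 'v gstate \<Rightarrow> bool" where
  invoke_write:
  "\<lbrakk> i = w; i \<notin> crashed s; ls = loc s i; opst ls = Idle; wsn = w_sync ls i + 1;
     ws' = (w_sync ls)(i := wsn) \<rbrakk> \<Longrightarrow>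
   step n t w s ((set_loc s i (ls\<lparr> w_sync := ws', history := (history ls)(wsn := v),
                                   opst := Writing wsn \<rparr>))
                 \<lparr> net := net s + send_to n i (\<lambda>j. ws' j = wsn - 1) (WriteM (wsn mod 2) v) \<rparr>)"
| write_return:
  "\<lbrakk> i \<in> {1..n}; i \<notin> crashed s; ls = loc s i; opst ls = Writing wsn;
     card {j \<in> {1..n}. w_sync ls j = wsn} \<ge> n - t \<rbrakk> \<Longrightarrow>
   step n t w s (set_loc s i (ls\<lparr> opst := Idle \<rparr>))"
| invoke_read:
  "\<lbrakk> i \<in> {1..n}; i \<notin> crashed s; ls = loc s i; opst ls = Idle; rsn = r_sync ls i + 1 \<rbrakk> \<Longrightarrow>
   step n t w s ((set_loc s i (ls\<lparr> r_sync := (r_sync ls)(i := rsn), opst := ReadWait1 rsn \<rparr>))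
                 \<lparr> net := net s + send_to n i (\<lambda>j. j \<noteq> i) ReadM \<rparr>)"
| read_phase2:
  "\<lbrakk> i \<in> {1..n}; i \<notin> crashed s; ls = loc s i; opst ls = ReadWait1 rsn;
     card {j \<in> {1..n}. r_sync ls j = rsn} \<ge> n - t \<rbrakk> \<Longrightarrow>
   step n t w s (set_loc s i (ls\<lparr> opst := ReadWait2 (w_sync ls i) \<rparr>))"
| read_return:
  "\<lbrakk> i \<in> {1..n}; i \<notin> crashed s; ls = loc s i; opst ls = ReadWait2 sn;
     card {j \<in> {1..n}. w_sync ls j \<ge> sn} \<ge> n - t \<rbrakk> \<Longrightarrow>
   step n t w s (set_loc s i (ls\<lparr> opst := Idle \<rparr>))"
| recv_write:
  "\<lbrakk> i \<in> {1..n}; i \<notin> crashed s; ls = loc s i; (j, i, WriteM b v) \<in># net s \<rbrakk> \<Longrightarrow>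
   step n t w s ((set_loc s i (ls\<lparr> pend := pend ls + {# HWrite j b v #} \<rparr>))
                 \<lparr> net := net s - {# (j, i, WriteM b v) #} \<rparr>)"
| recv_read:
  "\<lbrakk> i \<in> {1..n}; i \<notin> crashed s; ls = loc s i; (j, i, ReadM) \<in># net s \<rbrakk> \<Longrightarrow>
   step n t w s ((set_loc s i (ls\<lparr> pend := pend ls + {# HRead j (w_sync ls i) #} \<rparr>))
                 \<lparr> net := net s - {# (j, i, ReadM) #} \<rparr>)"
| recv_proceed:
  "\<lbrakk> i \<in> {1..n}; i \<notin> crashed s; ls = loc s i; (j, i, ProceedM) \<in># net s \<rbrakk> \<Longrightarrow>
   step n t w s ((set_loc s i (ls\<lparr> r_sync := (r_sync ls)(j := r_sync ls j + 1) \<rparr>))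
                 \<lparr> net := net s - {# (j, i, ProceedM) #} \<rparr>)"
| exec_write_handler:
  "\<lbrakk> i \<in> {1..n}; i \<notin> crashed s; ls = loc s i; HWrite j b v \<in># pend ls;
     b = (w_sync ls j + 1) mod 2;
     write_body n i j v (ls\<lparr> pend := pend ls - {# HWrite j b v #} \<rparr>) = (ls', out) \<rbrakk> \<Longrightarrow>
   step n t w s ((set_loc s i ls') \<lparr> net := net s + out \<rparr>)"
| exec_read_handler:
  "\<lbrakk> i \<in> {1..n}; i \<notin> crashed s; ls = loc s i; HRead j sn \<in># pend ls;
     w_sync ls j \<ge> sn \<rbrakk> \<Longrightarrow>
   step n t w s ((set_loc s i (ls\<lparr> pend := pend ls - {# HRead j sn #} \<rparr>))
                 \<lparr> net := net s + {# (i, j, ProceedM) #} \<rparr>)"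
| crash:
  "\<lbrakk> i \<in> {1..n}; i \<notin> crashed s; card (crashed s) < t \<rbrakk> \<Longrightarrow>
   step n t w s (s\<lparr> crashed := insert i (crashed s) \<rparr>)"

inductive reach :: "nat \<Rightarrow> nat \<Rightarrow> nat \<Rightarrow> 'v \<Rightarrow> 'v gstate \<Rightarrow> bool" where
  init: "reach n t w v0 (init_state v0)"
| stp: "reach n t w v0 s \<Longrightarrow> step n t w s s' \<Longrightarrow> reach n t w v0 s'"

end

theory Submission
  imports Defs
begin

fun wp :: "nat \<Rightarrow> nat \<Rightarrow> nat \<times> nat \<times> 'v msg \<Rightarrow> nat multiset" where
  "wp i j (a, c, WriteM b v) = (if a = i \<and> c = j then {#b#} else {#})"
| "wp i j (a, c, ReadM) = {#}"
| "wp i j (a, c, ProceedM) = {#}"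

fun hp :: "nat \<Rightarrow> 'v hnd \<Rightarrow> nat multiset" where
  "hp i (HWrite a b v) = (if a = i then {#b#} else {#})"
| "hp i (HRead a b) = {#}"

definition np :: "(nat \<times> nat \<times> 'v msg) multiset \<Rightarrow> nat \<Rightarrow> nat \<Rightarrow> nat multiset" where
  "np N i j = sum_mset (image_mset (wp i j) N)"

definition pp :: "'v hnd multiset \<Rightarrow> nat \<Rightarrow> nat multiset" where
  "pp P i = sum_mset (image_mset (hp i) P)"

lemma np_plus[simp]: "np (A + B) i j = np A i j + np B i j"
  by (simp add: np_def)
lemma np_empty[simp]: "np {#} i j = {#}"
  by (simp add: np_def)
lemma np_single[simp]: "np {#x#} i j = wp i j x"
  by (simp add: np_def)
lemma np_add_mset[simp]: "np (add_mset x A) i j = wp i j x + np A i j"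
  by (simp add: np_def)
lemma pp_add_mset[simp]: "pp (add_mset x A) i = hp i x + pp A i"
  by (simp add: pp_def)
lemma np_minus: "x \<in># N \<Longrightarrow> np (N - {#x#}) i j = np N i j - wp i j x"
proof -
  assume "x \<in># N"
  then have "N = (N - {#x#}) + {#x#}" by simp
  then have "np N i j = np (N - {#x#}) i j + wp i j x" by (metis np_plus np_single)
  then show ?thesis by simp
qed
lemma pp_plus[simp]: "pp (A + B) i = pp A i + pp B i"
  by (simp add: pp_def)
lemma pp_empty[simp]: "pp {#} i = {#}"
  by (simp add: pp_def)
lemma pp_single[simp]: "pp {#x#} i = hp i x"
  by (simp add: pp_def)
lemma pp_minus: "x \<in># N \<Longrightarrow> pp (N - {#x#}) i = pp N i - hp i x"
proof -
  assume "x \<in># N"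
  then have "N = (N - {#x#}) + {#x#}" by simp
  then have "pp N i = pp (N - {#x#}) i + hp i x" by (metis pp_plus pp_single)
  then show ?thesis by simp
qed

lemma np_send_write: "np (send_to n a P (WriteM b v)) i j =
   (if a = i \<and> j \<in> {1..n} \<and> P j then {#b#} else {#})"
proof -
  have "np (send_to n a P (WriteM b v)) i j = (\<Sum>l\<in>{l \<in> {1..n}. P l}. wp i j (a, l, WriteM b v))"
    by (simp add: np_def send_to_def sum_unfold_sum_mset image_mset.compositionality comp_def)
  also have "\<dots> = (\<Sum>l\<in>{l \<in> {1..n}. P l}. if l = j then (if a = i then {#b#} else {#}) else {#})"
    by (rule sum.cong) auto
  also have "\<dots> = (if a = i \<and> j \<in> {1..n} \<and> P j then {#b#} else {#})"
    by (simp add: sum.delta)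
  finally show ?thesis .
qed

lemma np_send_read: "np (send_to n a P ReadM) i j = {#}"
  by (simp add: np_def send_to_def image_mset.compositionality comp_def)

lemma np_minus': "x \<in># N \<Longrightarrow> np N i j = np (N - {#x#}) i j + wp i j x"
  by (metis insert_DiffM2 np_plus np_single)
lemma pp_minus': "x \<in># N \<Longrightarrow> pp N i = pp (N - {#x#}) i + hp i x"
  by (metis insert_DiffM2 pp_plus pp_single)

definition cc :: "(nat \<Rightarrow> 'v lstate) \<Rightarrow> nat \<Rightarrow> nat \<Rightarrow> nat" where
  "cc L i j = min (w_sync (L i) i) (w_sync (L i) j + 1)"

definition seqm :: "nat \<Rightarrow> nat \<Rightarrow> nat multiset" where
  "seqm a c = mset (map (\<lambda>k. k mod 2) [a + 1..<c + 1])"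

definition PI :: "(nat \<Rightarrow> 'v lstate) \<Rightarrow> (nat \<times> nat \<times> 'v msg) multiset \<Rightarrow> nat \<Rightarrow> nat \<Rightarrow> bool" where
  "PI L N i j \<longleftrightarrow> w_sync (L j) i \<le> cc L i j \<and>
     np N i j + pp (pend (L j)) i = seqm (w_sync (L j) i) (cc L i j)"

definition INV :: "nat \<Rightarrow> (nat \<Rightarrow> 'v lstate) \<Rightarrow> (nat \<times> nat \<times> 'v msg) multiset \<Rightarrow> bool" where
  "INV n L N \<longleftrightarrow> (\<forall>i j. w_sync (L i) j \<le> w_sync (L i) i) \<and>
     (\<forall>i j. (i \<notin> {1..n} \<or> i = j) \<longrightarrow> np N i j = {#} \<and> pp (pend (L j)) i = {#}) \<and>
     (\<forall>i\<in>{1..n}. \<forall>j\<in>{1..n}. i \<noteq> j \<longrightarrow> PI L N i j)"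

lemma inv_recv_write:
  assumes I: "INV n L N" and m: "(j, i, WriteM b v) \<in># N" and i: "i \<in> {1..n}"
  shows "INV n (L(i := (L i)\<lparr>pend := pend (L i) + {#HWrite j b v#}\<rparr>)) (N - {#(j, i, WriteM b v)#})"
    (is "INV n ?L ?N")
proof -
  have key: "\<And>p q. np N p q = np ?N p q + (if p = j \<and> q = i then {#b#} else {#})"
    using np_minus'[OF m] by simp
  have ws: "\<And>p. w_sync (?L p) = w_sync (L p)" by simp
  have cc: "cc ?L = cc L" by (intro ext) (simp add: cc_def)
  have pe: "\<And>p q. pp (pend (?L q)) p = pp (pend (L q)) p + (if p = j \<and> q = i then {#b#} else {#})"
    by auto
  show ?thesis using I unfolding INV_def PI_def ws cc pe key
    by (auto simp del: fun_upd_apply simp: add.commute add.left_commute)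
qed

lemma inv_frame:
  assumes I: "INV n L N"
    and ws: "\<And>p. w_sync (L' p) = w_sync (L p)"
    and ne: "\<And>p q. np N' p q = np N p q"
    and pe: "\<And>p q. pp (pend (L' q)) p = pp (pend (L q)) p"
  shows "INV n L' N'"
proof -
  have cc: "cc L' = cc L" by (intro ext) (simp add: cc_def ws)
  show ?thesis using I unfolding INV_def PI_def ws cc pe ne by auto
qed

lemma seqm_Suc: "a \<le> c \<Longrightarrow> seqm a (Suc c) = seqm a c + {#Suc c mod 2#}"
  by (simp add: seqm_def)

lemma seqm_first: "a < c \<Longrightarrow> seqm a c = {#Suc a mod 2#} + seqm (Suc a) c"
proof -
  assume "a < c"
  then have "[a + 1..<c + 1] = Suc a # [Suc a + 1..<c + 1]" by (simp add: upt_rec)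
  then show ?thesis unfolding seqm_def by simp
qed

lemma seqm_empty: "seqm a a = {#}"
  by (simp add: seqm_def)

lemma inv_invoke_write:
  assumes I: "INV n L N" and w: "w \<in> {1..n}"
    and k: "k = w_sync (L w) w + 1"
    and ws'd: "ws' = (w_sync (L w))(w := k)"
  shows "INV n (L(w := (L w)\<lparr>w_sync := ws', history := h', opst := o'\<rparr>))
             (N + send_to n w (\<lambda>j. ws' j = k - 1) (WriteM (k mod 2) v))"
    (is "INV n ?L ?N")
proof -
  have ws: "\<And>p. w_sync (?L p) = (if p = w then ws' else w_sync (L p))" by simp
  have pe: "\<And>p q. pp (pend (?L q)) p = pp (pend (L q)) p" by simp
  have ne: "\<And>p q. np ?N p q = np N p q + (if p = w \<and> q \<in> {1..n} \<and> ws' q = k - 1 then {#k mod 2#} else {#})"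
    by (simp add: np_send_write)
  have I1: "\<And>p q. w_sync (L p) q \<le> w_sync (L p) p"
   and I2: "\<And>p q. (p \<notin> {1..n} \<or> p = q) \<Longrightarrow> np N p q = {#} \<and> pp (pend (L q)) p = {#}"
   and I3: "\<And>p q. p \<in> {1..n} \<Longrightarrow> q \<in> {1..n} \<Longrightarrow> p \<noteq> q \<Longrightarrow> PI L N p q"
    using I unfolding INV_def by blast+
  have P1: "\<forall>p q. w_sync (?L p) q \<le> w_sync (?L p) p"
    using I1 by (auto simp: ws ws'd k le_SucI)
  have P2: "\<forall>p q. (p \<notin> {1..n} \<or> p = q) \<longrightarrow> np ?N p q = {#} \<and> pp (pend (?L q)) p = {#}"
  proof (intro allI impI)
    fix p q assume h: "p \<notin> {1..n} \<or> p = q"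
    have "\<not> (p = w \<and> q \<in> {1..n} \<and> ws' q = k - 1)" using h w by (auto simp: ws'd k)
    then show "np ?N p q = {#} \<and> pp (pend (?L q)) p = {#}" using I2[OF h] by (simp only: ne pe) simp
  qed
  have P3: "\<forall>p\<in>{1..n}. \<forall>q\<in>{1..n}. p \<noteq> q \<longrightarrow> PI ?L ?N p q"
  proof (intro ballI impI)
    fix p q assume p: "p \<in> {1..n}" and q: "q \<in> {1..n}" and pq: "p \<noteq> q"
    have old: "PI L N p q" using I3 p q pq by blast
    show "PI ?L ?N p q"
    proof (cases "p = w")
      case True
      define a where "a = w_sync (L w) q"
      have ak: "a \<le> k - 1" using I1[of w q] by (simp add: a_def k)
      have wq: "w_sync (?L q) p = w_sync (L q) p" using pq True by simp
      show ?thesis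
      proof (cases "a = k - 1")
        case True2: True
        have c1: "cc L p q = k - 1" using True True2 by (simp add: cc_def a_def k)
        have c2: "cc ?L p q = k" using True True2 pq by (simp add: cc_def a_def k ws'd)
        have e: "np ?N p q = np N p q + {#k mod 2#}" using True True2 pq q
          by (simp only: ne) (simp add: ws'd a_def)
        have le: "w_sync (L q) p \<le> k - 1" using old c1 by (simp add: PI_def)
        have sq: "seqm (w_sync (L q) p) k = seqm (w_sync (L q) p) (k - 1) + {#k mod 2#}"
          using seqm_Suc[OF le] k by simp
        show ?thesis using old unfolding PI_def c1 c2 wq e pe sq
          using le by (simp add: add.commute add.left_commute k)
      next
        case False
        have c: "cc ?L p q = cc L p q" using True False pq ak
          by (simp add: cc_def a_def k ws'd)
        have e: "np ?N p q = np N p q" using True False pq q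
          by (simp only: ne) (simp add: ws'd a_def)
        show ?thesis using old unfolding PI_def c wq e pe .
      qed
    next
      case False
      have c: "cc ?L p q = cc L p q" using False by (simp add: cc_def)
      have wq: "w_sync (?L q) p = w_sync (L q) p" using False by (simp add: ws'd)
      have e: "np ?N p q = np N p q" using False by (simp only: ne) simp
      show ?thesis using old unfolding PI_def c wq e pe .
    qed
  qed
  show ?thesis unfolding INV_def using P1 P2 P3 by blast
qed

lemma mset_add_minus: "b \<in># B \<Longrightarrow> A + (B - {#b#}) = A + B - {#b#}"
proof -
  assume "b \<in># B"
  then obtain C where "B = add_mset b C" by (metis multi_member_split)
  then show ?thesis by simp
qed

lemma inv_handler_generic:
  assumes I: "INV n L N" and i: "i \<in> {1..n}"
    and hw: "HWrite j b v \<in># pend (L i)"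
    and bm: "b = (w_sync (L i) j + 1) mod 2"
    and pe': "pend ls' = pend (L i) - {#HWrite j b v#}"
    and Wj: "w_sync ls' j = w_sync (L i) j + 1"
    and Wo: "\<And>p. p \<noteq> i \<Longrightarrow> p \<noteq> j \<Longrightarrow> w_sync ls' p = w_sync (L i) p"
    and Wmax: "\<And>p. j \<noteq> i \<Longrightarrow> w_sync ls' p \<le> w_sync ls' i"
    and outo: "\<And>p q. p \<noteq> i \<Longrightarrow> np out p q = {#}"
    and outi: "j \<noteq> i \<Longrightarrow> np out i i = {#}"
    and key: "\<And>q a. q \<in> {1..n} \<Longrightarrow> q \<noteq> i \<Longrightarrow> j \<in> {1..n} \<Longrightarrow> j \<noteq> i \<Longrightarrow> a \<le> cc L i q \<Longrightarrow>
        a \<le> min (w_sync ls' i) (w_sync ls' q + 1) \<and>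
        seqm a (min (w_sync ls' i) (w_sync ls' q + 1)) = seqm a (cc L i q) + np out i q"
  shows "INV n (L(i := ls')) (N + out)"
proof -
  let ?L = "L(i := ls')" and ?N = "N + out"
  have I1: "\<And>p q. w_sync (L p) q \<le> w_sync (L p) p"
   and I2: "\<And>p q. (p \<notin> {1..n} \<or> p = q) \<Longrightarrow> np N p q = {#} \<and> pp (pend (L q)) p = {#}"
   and I3: "\<And>p q. p \<in> {1..n} \<Longrightarrow> q \<in> {1..n} \<Longrightarrow> p \<noteq> q \<Longrightarrow> PI L N p q"
    using I unfolding INV_def by blast+
  have bin: "b \<in># pp (pend (L i)) j"
  proof -
    have "pp (pend (L i)) j = pp (pend (L i) - {#HWrite j b v#}) j + hp j (HWrite j b v)"
      using pp_minus'[OF hw] .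
    then show ?thesis by simp
  qed
  have j: "j \<in> {1..n}"
  proof (rule ccontr)
    assume "j \<notin> {1..n}"
    then have "pp (pend (L i)) j = {#}" using I2 by blast
    then show False using bin by simp
  qed
  have ji: "j \<noteq> i"
  proof
    assume "j = i"
    then have "pp (pend (L i)) j = {#}" using I2 by blast
    then show False using bin by simp
  qed
  define m where "m = w_sync (L i) j"
  have pij: "PI L N j i" using I3 j i ji by blast
  have mc: "m < cc L j i"
  proof (rule ccontr)
    assume "\<not> m < cc L j i"
    then have "m = cc L j i" using pij by (simp add: PI_def m_def)
    then have "np N j i + pp (pend (L i)) j = {#}" using pij by (simp add: PI_def m_def seqm_empty)
    then show False using bin by simp
  qed
  have pe: "\<And>p q. pp (pend (?L q)) p = pp (pend (L q)) p - (if q = i \<and> p = j then {#b#} else {#})"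
    by (auto simp: pe' pp_minus[OF hw])
  have ne: "\<And>p q. np ?N p q = np N p q + np out p q" by simp
  have P1: "\<forall>p q. w_sync (?L p) q \<le> w_sync (?L p) p"
    using I1 Wmax ji by auto
  have P2: "\<forall>p q. (p \<notin> {1..n} \<or> p = q) \<longrightarrow> np ?N p q = {#} \<and> pp (pend (?L q)) p = {#}"
  proof (intro allI impI)
    fix p q assume h: "p \<notin> {1..n} \<or> p = q"
    have "np out p q = {#}" using h i outo outi ji by (cases "p = i") auto
    then show "np ?N p q = {#} \<and> pp (pend (?L q)) p = {#}" using I2[OF h] by (simp only: ne pe) simp
  qed
  have P3: "\<forall>p\<in>{1..n}. \<forall>q\<in>{1..n}. p \<noteq> q \<longrightarrow> PI ?L ?N p q"
  proof (intro ballI impI)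
    fix p q assume p: "p \<in> {1..n}" and q: "q \<in> {1..n}" and pq: "p \<noteq> q"
    have old: "PI L N p q" using I3 p q pq by blast
    show "PI ?L ?N p q"
    proof (cases "p = i")
      case True
      have wq: "w_sync (?L q) p = w_sync (L q) p" using pq True by simp
      have c: "cc ?L p q = min (w_sync ls' i) (w_sync ls' q + 1)" using True by (simp add: cc_def)
      have pp': "pp (pend (?L q)) p = pp (pend (L q)) p" using pq True by (simp only: pe) simp
      have le: "w_sync (L q) p \<le> cc L i q" using old True by (simp add: PI_def)
      note K = key[OF q pq[unfolded True, symmetric] j ji le]
      have o1: "np N i q + pp (pend (L q)) i = seqm (w_sync (L q) i) (cc L i q)"
        using old True by (simp add: PI_def)
      have "np N i q + np out i q + pp (pend (L q)) i = (np N i q + pp (pend (L q)) i) + np out i q"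
        by (simp add: ac_simps)
      also have "\<dots> = seqm (w_sync (L q) i) (min (w_sync ls' i) (w_sync ls' q + 1))"
        using o1 K True by simp
      finally show ?thesis using K True unfolding PI_def c wq pp' ne by simp
    next
      case False
      have c: "cc ?L p q = cc L p q" using False by (simp add: cc_def)
      have e: "np ?N p q = np N p q" using False outo by simp
      show ?thesis
      proof (cases "q = i \<and> p = j")
        case True
        have wq: "w_sync (?L q) p = Suc m" using True Wj by (simp add: m_def)
        have pp': "pp (pend (?L q)) p = pp (pend (L q)) p - {#b#}" using True by (simp only: pe) simp
        have sq: "seqm m (cc L j i) = {#b#} + seqm (Suc m) (cc L j i)"
          using seqm_first[OF mc] bm by (simp add: m_def)
        have "np N p q + (pp (pend (L q)) p - {#b#}) = np N p q + pp (pend (L q)) p - {#b#}"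
          using bin True by (simp add: mset_add_minus)
        also have "\<dots> = seqm (Suc m) (cc L j i)" using pij True sq
          by (simp add: PI_def m_def)
        finally show ?thesis using True mc unfolding PI_def c e wq pp' by simp
      next
        case False2: False
        have wq: "w_sync (?L q) p = w_sync (L q) p" using False2 False Wo by auto
        have pp': "pp (pend (?L q)) p = pp (pend (L q)) p" using False2 by (simp only: pe) simp
        show ?thesis using old unfolding PI_def c e wq pp' .
      qed
    qed
  qed
  show ?thesis unfolding INV_def using P1 P2 P3 by blast
qed

lemma inv_exec_write:
  assumes I: "INV n L N" and i: "i \<in> {1..n}"
    and hw: "HWrite j b v \<in># pend (L i)"
    and bm: "b = (w_sync (L i) j + 1) mod 2"
    and wb: "write_body n i j v ((L i)\<lparr>pend := pend (L i) - {#HWrite j b v#}\<rparr>) = (ls', out)"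
  shows "INV n (L(i := ls')) (N + out)"
proof -
  define m where "m = w_sync (L i) j"
  define ow where "ow = w_sync (L i) i"
  have I1: "\<And>p q. w_sync (L p) q \<le> w_sync (L p) p" using I unfolding INV_def by blast
  have mo: "m \<le> ow" using I1 by (simp add: m_def ow_def)
  consider (A) "m = ow" | (B) "m + 1 < ow" | (C) "m + 1 = ow" using mo by linarith
  then show ?thesis
  proof cases
    case A
    have pe': "pend ls' = pend (L i) - {#HWrite j b v#}"
      and W: "w_sync ls' = (w_sync (L i))(i := m + 1, j := m + 1)"
      and out: "out = send_to n i (\<lambda>l. ((w_sync (L i))(i := m + 1)) l = m + 1 - 1) (WriteM ((m + 1) mod 2) v)"
      using wb A by (auto simp: write_body_def Let_def m_def ow_def)
    show ?thesis
    proof (rule inv_handler_generic[OF I i hw bm pe'])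
      show "w_sync ls' j = w_sync (L i) j + 1" by (simp add: W m_def)
      show "\<And>p. p \<noteq> i \<Longrightarrow> p \<noteq> j \<Longrightarrow> w_sync ls' p = w_sync (L i) p" by (simp add: W)
      show "w_sync ls' p \<le> w_sync ls' i" if "j \<noteq> i" for p
      proof -
        have "w_sync (L i) p \<le> m" using I1[of i p] A by (simp add: ow_def)
        then show ?thesis by (simp add: W)
      qed
      show "\<And>p q. p \<noteq> i \<Longrightarrow> np out p q = {#}" by (simp add: out np_send_write)
      show "j \<noteq> i \<Longrightarrow> np out i i = {#}" by (simp add: out np_send_write)
      fix q a assume q: "q \<in> {1..n}" and qi: "q \<noteq> i" and j: "j \<in> {1..n}" and ji: "j \<noteq> i"
        and a: "a \<le> cc L i q"
      have e: "np out i q = (if w_sync (L i) q = m then {#(m + 1) mod 2#} else {#})"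
        using q qi by (simp add: out np_send_write)
      have wq: "w_sync (L i) q \<le> m" using I1[of i q] A by (simp add: ow_def)
      show "a \<le> min (w_sync ls' i) (w_sync ls' q + 1) \<and>
        seqm a (min (w_sync ls' i) (w_sync ls' q + 1)) = seqm a (cc L i q) + np out i q"
      proof (cases "w_sync (L i) q = m")
        case True
        have c1: "cc L i q = m" using True A by (simp add: cc_def ow_def)
        have c2: "min (w_sync ls' i) (w_sync ls' q + 1) = Suc m" using True ji qi by (simp add: W)
        show ?thesis using a c1 c2 e True seqm_Suc[of a m] by simp
      next
        case False
        have qj: "q \<noteq> j" using False by (auto simp: m_def)
        have c1: "cc L i q = Suc (w_sync (L i) q)" using False wq A by (simp add: cc_def ow_def)
        have c2: "min (w_sync ls' i) (w_sync ls' q + 1) = Suc (w_sync (L i) q)"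
          using False wq qj qi ji by (simp add: W)
        show ?thesis using a c1 c2 e False by simp
      qed
    qed
  next
    case B
    have pe': "pend ls' = pend (L i) - {#HWrite j b v#}"
      and W: "w_sync ls' = (w_sync (L i))(j := m + 1)"
      and out: "out = {#(i, j, WriteM ((m + 2) mod 2) (history (L i) (m + 2)))#}"
      using wb B by (auto simp: write_body_def Let_def m_def ow_def)
    show ?thesis
    proof (rule inv_handler_generic[OF I i hw bm pe'])
      show "w_sync ls' j = w_sync (L i) j + 1" by (simp add: W m_def)
      show "\<And>p. p \<noteq> i \<Longrightarrow> p \<noteq> j \<Longrightarrow> w_sync ls' p = w_sync (L i) p" by (simp add: W)
      show "\<And>p. j \<noteq> i \<Longrightarrow> w_sync ls' p \<le> w_sync ls' i"
        using I1[of i] B by (auto simp: W ow_def)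
      show "\<And>p q. p \<noteq> i \<Longrightarrow> np out p q = {#}" by (simp add: out)
      show "j \<noteq> i \<Longrightarrow> np out i i = {#}" by (simp add: out)
      fix q a assume q: "q \<in> {1..n}" and qi: "q \<noteq> i" and j: "j \<in> {1..n}" and ji: "j \<noteq> i"
        and a: "a \<le> cc L i q"
      have Wi: "w_sync ls' i = ow" using ji by (simp add: W ow_def)
      show "a \<le> min (w_sync ls' i) (w_sync ls' q + 1) \<and>
        seqm a (min (w_sync ls' i) (w_sync ls' q + 1)) = seqm a (cc L i q) + np out i q"
      proof (cases "q = j")
        case True
        have c1: "cc L i q = Suc m" using True B by (simp add: cc_def ow_def m_def)
        have c2: "min (w_sync ls' i) (w_sync ls' q + 1) = Suc (Suc m)" using True B Wi by (simp add: W)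
        have e: "np out i q = {#Suc (Suc m) mod 2#}" using True by (simp add: out)
        show ?thesis using a c1 c2 e seqm_Suc[of a "Suc m"] by simp
      next
        case False
        have c: "min (w_sync ls' i) (w_sync ls' q + 1) = cc L i q" using False Wi
          by (simp add: W cc_def ow_def)
        have e: "np out i q = {#}" using False by (simp add: out)
        show ?thesis using a c e by simp
      qed
    qed
  next
    case C
    have pe': "pend ls' = pend (L i) - {#HWrite j b v#}"
      and W: "w_sync ls' = (w_sync (L i))(j := m + 1)"
      and out: "out = {#}"
      using wb C by (auto simp: write_body_def Let_def m_def ow_def)
    show ?thesis
    proof (rule inv_handler_generic[OF I i hw bm pe'])
      show "w_sync ls' j = w_sync (L i) j + 1" by (simp add: W m_def)
      show "\<And>p. p \<noteq> i \<Longrightarrow> p \<noteq> j \<Longrightarrow> w_sync ls' p = w_sync (L i) p" by (simp add: W)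
      show "\<And>p. j \<noteq> i \<Longrightarrow> w_sync ls' p \<le> w_sync ls' i"
        using I1[of i] C by (auto simp: W ow_def)
      show "\<And>p q. p \<noteq> i \<Longrightarrow> np out p q = {#}" by (simp add: out)
      show "j \<noteq> i \<Longrightarrow> np out i i = {#}" by (simp add: out)
      fix q a assume q: "q \<in> {1..n}" and qi: "q \<noteq> i" and j: "j \<in> {1..n}" and ji: "j \<noteq> i"
        and a: "a \<le> cc L i q"
      have Wi: "w_sync ls' i = ow" using ji by (simp add: W ow_def)
      have c: "min (w_sync ls' i) (w_sync ls' q + 1) = cc L i q"
        using Wi C by (cases "q = j") (simp_all add: W cc_def ow_def m_def)
      show "a \<le> min (w_sync ls' i) (w_sync ls' q + 1) \<and>
        seqm a (min (w_sync ls' i) (w_sync ls' q + 1)) = seqm a (cc L i q) + np out i q"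
        using a c by (simp add: out)
    qed
  qed
qed

lemma inv_step:
  assumes I: "INV n (loc s) (net s)" and w: "w \<in> {1..n}" and st: "step n t w s s'"
  shows "INV n (loc s') (net s')"
  using st
proof cases
  case (invoke_write i ls wsn ws' v)
  then show ?thesis
    using inv_invoke_write[OF I w, where k = wsn and ws' = ws' and h' = "(history ls)(wsn := v)" and o' = "Writing wsn" and v = v]
    by (simp add: set_loc_def)
next
  case (write_return i ls wsn)
  then show ?thesis by (intro inv_frame[OF I]) (auto simp: set_loc_def)
next
  case (invoke_read i ls rsn)
  then show ?thesis by (intro inv_frame[OF I]) (auto simp: set_loc_def np_send_read)
next
  case (read_phase2 i ls rsn)
  then show ?thesis by (intro inv_frame[OF I]) (auto simp: set_loc_def)
next
  case (read_return i ls sn)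
  then show ?thesis by (intro inv_frame[OF I]) (auto simp: set_loc_def)
next
  case (recv_write i ls j b v)
  then show ?thesis using inv_recv_write[OF I, of j i b v] by (simp add: set_loc_def)
next
  case (recv_read i ls j)
  then show ?thesis by (intro inv_frame[OF I]) (auto simp: set_loc_def np_minus)
next
  case (recv_proceed i ls j)
  then show ?thesis by (intro inv_frame[OF I]) (auto simp: set_loc_def np_minus)
next
  case (exec_write_handler i ls j b v ls' out)
  then show ?thesis using inv_exec_write[OF I, of i j b v ls' out] by (simp add: set_loc_def)
next
  case (exec_read_handler i ls j sn)
  then show ?thesis by (intro inv_frame[OF I]) (auto simp: set_loc_def pp_minus)
next
  case (crash i)
  then show ?thesis using I by simp
qed

lemma inv_init: "INV n (loc (init_state v0)) (net (init_state v0))"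
  by (simp add: INV_def init_state_def PI_def cc_def seqm_def pp_def)

lemma inv_reach: "reach n t w v0 s \<Longrightarrow> w \<in> {1..n} \<Longrightarrow> INV n (loc s) (net s)"
  by (induction rule: reach.induct) (auto intro: inv_init inv_step)

theorem lemma2:
  fixes n t w :: nat and v0 :: 'v and s :: "'v gstate"
  assumes "2 * t < n" and "w \<in> {1..n}"
    and "reach n t w v0 s"
    and "i \<in> {1..n}" and "j \<in> {1..n}"
  shows "w_sync (loc s j) i \<le> w_sync (loc s i) i"
proof (cases "i = j")
  case True
  then show ?thesis by simp
next
  case False
  have I: "INV n (loc s) (net s)" using inv_reach assms(3,2) .
  then have "PI (loc s) (net s) i j" using assms(4,5) False unfolding INV_def by blast
  then have "w_sync (loc s j) i \<le> cc (loc s) i j" by (simp add: PI_def)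
  then show ?thesis by (simp add: cc_def)
qed

end
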